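(* Consider the slotted content-push system described in the context, operated under a threshold-based policy with integer threshold $C_{\mathrm{thr}}$, $1\le C_{\mathrm{thr}}\le N$: in every slot $k$ with $C_k<C_{\mathrm{thr}}$ the SBS takes the push action $u_k=2$. Assume that the energy $E_p$ required for a push is always available. Then, in the stationary regime, the probability that the SBS pushes a content in a slot is $$\Pr(u_k=2)=\frac{p_c\,C_{\mathrm{thr}}}{N+p_c}.$$
   Context: Time is slotted, $k=1,2,\dots$. There are $N$ contents of interest, ranked $c_1,\dots,c_N$. The content at rank $i$ has popularity (Zipf) $f_i=\frac{i^{-v}}{\sum_{j=1}^N j^{-v}}$ with skew $v\ge 0$. In each slot, with probability $p_c\in(0,1]$, one content is selected uniformly at random (probability $1/N$ each) and removed; the contents ranked below it move up one rank, and a new content enters at rank $N$. Users store the pushed contents, which are always the $C_k$ most popular ones $c_1,\dots,c_{C_k}$, where $C_k\in\{0,\dots,N\}$ is the push state. In each slot the SBS takes an action $u_k\in\{0,1,2\}$ (sleep, unicast, push). A push transmits content $c_{C_k+1}$ to all users at energy cost $E_p$. The push state evolves as follows. If $u_k\in\{0,1\}$: $C_{k+1}=C_k-1$ with probability $p_cC_k/N$, and $C_{k+1}=C_k$ otherwise. If $u_k=2$ (only allowed when $C_k<N$): $C_{k+1}=C_k$ with probability $p_cC_k/N$, and $C_{k+1}=C_k+1$ otherwise. *)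

theory Defs
  imports Complex_Main
begin

text \<open>One-slot transition probability of the push state: from state i to state j
  under action a (0 = sleep, 1 = unicast, 2 = push), with N contents and
  content-change probability pc.\<close>
definition push_trans :: "nat \<Rightarrow> real \<Rightarrow> nat \<Rightarrow> nat \<Rightarrow> nat \<Rightarrow> real" where
  "push_trans N pc a i j =
     (if a = 2 then
        (if j = i then pc * real i / real N else 0)
      + (if j = i + 1 then 1 - pc * real i / real N else 0)
      else
        (if j + 1 = i then pc * real i / real N else 0)
      + (if j = i then 1 - pc * real i / real N else 0))"

definition stationary_dist :: "nat \<Rightarrow> real \<Rightarrow> (nat \<Rightarrow> nat) \<Rightarrow> (nat \<Rightarrow> real) \<Rightarrow> bool" where
  "stationary_dist N pc u st \<longleftrightarrow>
     (\<forall>i\<le>N. st i \<ge> 0) \<and> (\<Sum>i=0..N. st i) = 1 \<and>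
     (\<forall>j\<le>N. st j = (\<Sum>i=0..N. st i * push_trans N pc (u i) i j))"

end

theory Submission
  imports Defs
begin

lemma pt_dec: "push_trans N pc a i j =
   (if i+1=j then (if a=2 then 1 - pc*real i/real N else 0) else 0)
 + (if i=j then (if a=2 then pc*real i/real N else 1 - pc*real i/real N) else 0)
 + (if i=j+1 then (if a=2 then 0 else pc*real i/real N) else 0)"
  unfolding push_trans_def by auto

lemma sum_d1: fixes j N :: nat shows "(\<Sum>i=0..N. if i+1=j then f i else (0::real)) = (if 0<j \<and> j-1 \<le> N then f (j-1) else 0)"
proof -
  have "(\<Sum>i=0..N. if i+1=j then f i else (0::real)) = (\<Sum>i=0..N. if 0<j \<and> i=j-1 then f i else 0)"
  proof -
    have "(i+1=j) = (0<j \<and> i=j-1)" for i by auto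
    then show ?thesis by simp
  qed
  also have "\<dots> = (if 0<j \<and> j-1 \<le> N then f (j-1) else 0)"
    by (cases "0<j") (auto simp: sum.delta)
  finally show ?thesis .
qed

lemma bal:
  fixes st :: "nat \<Rightarrow> real"
  assumes "j \<le> N"
  shows "(\<Sum>i=0..N. st i * push_trans N pc (u i) i j) =
     (if 0<j then st(j-1) * (if u(j-1)=2 then 1 - pc*real (j-1)/real N else 0) else 0)
   + st j * (if u j=2 then pc*real j/real N else 1 - pc*real j/real N)
   + (if j < N then st(j+1) * (if u(j+1)=2 then 0 else pc*real (j+1)/real N) else 0)"
proof -
  have "(\<Sum>i=0..N. st i * push_trans N pc (u i) i j) =
     (\<Sum>i=0..N. if i+1=j then st i * (if u i=2 then 1 - pc*real i/real N else 0) else 0)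
   + (\<Sum>i=0..N. if i=j then st i * (if u i=2 then pc*real i/real N else 1 - pc*real i/real N) else 0)
   + (\<Sum>i=0..N. if i=j+1 then st i * (if u i=2 then 0 else pc*real i/real N) else 0)"
    unfolding pt_dec sum.distrib[symmetric]
    by (rule sum.cong) (auto simp: algebra_simps)
  show ?thesis
    unfolding \<open>(\<Sum>i=0..N. st i * push_trans N pc (u i) i j) = _\<close> sum_d1
    using assms by (auto simp: sum.delta)
qed

lemma alg: fixes a b c n pc :: real
  assumes "n > 0" "b*(pc*c/n) = a*(1 - pc*(c-1)/n)" "a + b = 1"
  shows "a*(n+pc) = pc*c"
proof -
  have "b = 1 - a" using assms(3) by simp
  with assms(2) have "(1-a)*(pc*c/n) = a*(1 - pc*(c-1)/n)" by simp
  hence "(1-a)*(pc*c) = a*(n - pc*(c-1))" using assms(1) by (simp add: field_simps)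
  thus ?thesis by (simp add: algebra_simps)
qed

theorem lemma1:
  fixes N Cthr :: nat and pc :: real and u :: "nat \<Rightarrow> nat" and st :: "nat \<Rightarrow> real"
  assumes "0 < pc" and "pc \<le> 1"
    and "1 \<le> Cthr" and "Cthr \<le> N"
    and "\<forall>i\<le>N. u i \<in> {0, 1, 2}"
    and "\<forall>i\<le>N. (u i = 2 \<longleftrightarrow> i < Cthr)"
    and "stationary_dist N pc u st"
  shows "(\<Sum>i\<in>{i\<in>{0..N}. u i = 2}. st i) = pc * real Cthr / (real N + pc)"
proof -
  define C where "C = Cthr"
  have NP: "real N > 0" using assms by simp
  have bal_eq: "st j = (if 0<j then st(j-1) * (if u(j-1)=2 then 1 - pc*real (j-1)/real N else 0) else 0)
   + st j * (if u j=2 then pc*real j/real N else 1 - pc*real j/real N)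
   + (if j < N then st(j+1) * (if u(j+1)=2 then 0 else pc*real (j+1)/real N) else 0)" if "j \<le> N" for j
    using assms(7) that bal[OF that, of st pc u] unfolding stationary_dist_def by metis
  have U: "\<And>i. i \<le> N \<Longrightarrow> u i = 2 \<longleftrightarrow> i < C" using assms(6) C_def by auto
  have low: "st j = 0" if "j+2 \<le> C" for j
    using that
  proof (induction j)
    case 0
    have "1 < C" using 0 by simp
    hence "u 1 = 2" using U assms(4) C_def by auto
    with bal_eq[of 0] 0 assms(4) C_def have "st 0 = st 0 * 0" using U by simp
    then show ?case by simp
  next
    case (Suc j)
    hence z: "st j = 0" by simp
    have jN: "Suc j < N" using Suc assms(4) C_def by simp
    have u1: "u j = 2" "u (Suc j) = 2" "u (Suc (Suc j)) = 2" using U Suc.prems jN by auto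
    have e: "st (Suc j) = st (Suc j) * (pc*real (Suc j)/real N)"
      using bal_eq[of "Suc j"] jN z u1 by simp
    have "pc*real (Suc j) < real N"
    proof -
      have "pc*real (Suc j) \<le> real (Suc j)" using assms(2) by (simp add: mult_left_le_one_le)
      also have "\<dots> < real N" using jN by simp
      finally show ?thesis .
    qed
    hence "pc*real (Suc j)/real N < 1" using NP by simp
    with e show ?case
      by (metis mult.right_neutral mult_left_cancel order_less_irrefl)
  qed
  have high: "st j = 0" if "C < j" "j \<le> N" for j
  proof -
    have "\<forall>j. N - j = k \<longrightarrow> C < j \<longrightarrow> j \<le> N \<longrightarrow> st j = 0" for k
    proof (induction k)
      case 0
      show ?case
      proof (intro allI impI)
        fix j assume h: "N - j = 0" "C < j" "j \<le> N"
        hence jN: "j = N" by simp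
        have "u (j-1) \<noteq> 2" "u j \<noteq> 2" using U h by auto
        hence "st j = st j * (1 - pc*real j/real N)" using bal_eq[of j] h jN by simp
        hence "st j * (pc*real j/real N) = 0" by (simp add: algebra_simps)
        moreover have "pc*real j/real N > 0" using h assms(1) NP by simp
        ultimately show "st j = 0" using h assms(1) NP by simp
      qed
    next
      case (Suc k)
      show ?case
      proof (intro allI impI)
        fix j assume h: "N - j = Suc k" "C < j" "j \<le> N"
        hence jN: "j < N" by simp
        have z: "st (j+1) = 0" using Suc.IH h by auto
        have "u (j-1) \<noteq> 2" "u j \<noteq> 2" using U h by auto
        hence "st j = st j * (1 - pc*real j/real N)" using bal_eq[of j] h jN z by simp
        hence "st j * (pc*real j/real N) = 0" by (simp add: algebra_simps)
        moreover have "pc*real j/real N > 0" using h assms(1) NP by simp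
        ultimately show "st j = 0" using h assms(1) NP by simp
      qed
    qed
    thus ?thesis using that by blast
  qed
  have C1: "1 \<le> C" "C \<le> N" using assms C_def by auto
  have zero: "st i = 0" if "i \<le> N" "i \<noteq> C-1" "i \<noteq> C" for i
  proof (cases "i < C")
    case True thus ?thesis using low[of i] that by simp
  next
    case False thus ?thesis using high[of i] that by simp
  qed
  have uC: "u (C-1) = 2" "u C \<noteq> 2" using U C1 by auto
  have eqC: "st C = st (C-1) * (1 - pc*real (C-1)/real N) + st C * (1 - pc*real C/real N)"
  proof -
    have "(if C < N then st(C+1) * (if u(C+1)=2 then 0 else pc*real (C+1)/real N) else 0) = 0"
      using high[of "C+1"] by auto
    thus ?thesis using bal_eq[of C] C1 uC by simp
  qed
  have sum1: "(\<Sum>i=0..N. st i) = st (C-1) + st C"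
  proof -
    have "(\<Sum>i=0..N. st i) = (\<Sum>i=0..N. (if i = C-1 then st (C-1) else 0) + (if i = C then st C else 0))"
      using zero C1 by (intro sum.cong) auto
    also have "\<dots> = st (C-1) + st C" using C1 by (auto simp add: sum.distrib)
    finally show ?thesis .
  qed
  have S: "{i\<in>{0..N}. u i = 2} = {0..<C}" using U C1 by auto
  have sum2: "(\<Sum>i\<in>{0..<C}. st i) = st (C-1)"
  proof -
    have "(\<Sum>i\<in>{0..<C}. st i) = (\<Sum>i\<in>{0..<C}. (if i = C-1 then st (C-1) else 0))"
      using zero C1 by (intro sum.cong) auto
    also have "\<dots> = st (C-1)" using C1 by simp
    finally show ?thesis .
  qed
  have "sum st {0..N} = 1" using assms(7) unfolding stationary_dist_def by blast
  hence tot: "st (C-1) + st C = 1" using sum1 by linarith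
  have rC: "real (C-1) = real C - 1" using C1 by simp
  have e1: "st C * (pc*real C/real N) = st (C-1) * (1 - pc*(real C - 1)/real N)"
    using eqC unfolding rC by (simp add: algebra_simps)
  have "st (C-1) * (real N + pc) = pc * real C"
    using alg[OF NP e1 tot] .
  hence "st (C-1) = pc * real C / (real N + pc)" using NP assms(1)
    by (simp add: field_simps)
  thus ?thesis using S sum2 C_def by simp
qed

end
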